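(* For every $k\ge 1$, the commutator subgroup of $G_k$ consists exactly of commutators: $$G_k'=\{[f_1,f_2]: f_1,f_2\in G_k\}.$$
   Context: $G_k$ is the subgroup of the automorphism group $B_k\cong\wr_{i=1}^kC_2$ of the binary rooted tree of depth $k$ consisting of automorphisms acting by even permutations on the $2^k$ leaves; $G_k\cong\mathrm{Syl}_2(A_{2^k})$. $[a,b]=aba^{-1}b^{-1}$. *)

theory Defs
  imports "HOL-Algebra.Algebra" "HOL-Combinatorics.Combinatorics"
begin

text \<open>Vertices of the binary rooted tree of depth k: binary words of length at most k
  (the root is the empty word, the children of xs are xs@[False] and xs@[True]);
  the leaves are the words of length exactly k.\<close>

definition tree_vertices :: "nat \<Rightarrow> bool list set" where
  "tree_vertices k = {xs. length xs \<le> k}"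

definition tree_aut :: "nat \<Rightarrow> (bool list \<Rightarrow> bool list) \<Rightarrow> bool" where
  "tree_aut k f \<longleftrightarrow>
     bij_betw f (tree_vertices k) (tree_vertices k) \<and>
     (\<forall>xs. xs \<notin> tree_vertices k \<longrightarrow> f xs = xs) \<and>
     (\<forall>xs \<in> tree_vertices k. length (f xs) = length xs) \<and>
     (\<forall>xs b. length xs < k \<longrightarrow> butlast (f (xs @ [b])) = f xs)"

definition leaf_perm :: "nat \<Rightarrow> (bool list \<Rightarrow> bool list) \<Rightarrow> bool list \<Rightarrow> bool list" where
  "leaf_perm k f = (\<lambda>xs. if length xs = k then f xs else xs)"

definition B_grp :: "nat \<Rightarrow> (bool list \<Rightarrow> bool list) monoid" where
  "B_grp k = \<lparr>carrier = {f. tree_aut k f}, monoid.mult = (\<circ>), one = id\<rparr>"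

definition G_grp :: "nat \<Rightarrow> (bool list \<Rightarrow> bool list) monoid" where
  "G_grp k = \<lparr>carrier = {f. tree_aut k f \<and> evenperm (leaf_perm k f)}, monoid.mult = (\<circ>), one = id\<rparr>"

end

theory Submission
  imports Defs
begin
abbreviation iv :: "('a \<Rightarrow> 'a) \<Rightarrow> 'a \<Rightarrow> 'a" where "iv f \<equiv> inv_into UNIV f"

lemma ta_bij: "tree_aut k f \<Longrightarrow> bij_betw f (tree_vertices k) (tree_vertices k)"
  by (simp add: tree_aut_def)
lemma ta_out: "tree_aut k f \<Longrightarrow> length xs > k \<Longrightarrow> f xs = xs"
  by (simp add: tree_aut_def tree_vertices_def)
lemma ta_len: "tree_aut k f \<Longrightarrow> length (f xs) = length xs"
  by (cases "length xs \<le> k") (auto simp add: tree_aut_def tree_vertices_def)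
lemma ta_par: "tree_aut k f \<Longrightarrow> length xs < k \<Longrightarrow> butlast (f (xs @ [b])) = f xs"
  by (simp add: tree_aut_def)

lemma ta_bij_UNIV: assumes "tree_aut k f" shows "bij f"
proof -
  have b: "bij_betw f (tree_vertices k) (tree_vertices k)" using assms by (rule ta_bij)
  have o: "bij_betw f (- tree_vertices k) (- tree_vertices k)"
    by (rule bij_betw_cong[THEN iffD2, OF _ bij_betw_id]) (use assms in \<open>simp add: tree_aut_def\<close>)
  have "bij_betw f (tree_vertices k \<union> - tree_vertices k) (tree_vertices k \<union> - tree_vertices k)"
    by (rule bij_betw_combine[OF b o]) simp
  then show ?thesis by (simp add: Compl_partition)
qed

lemma ta_id: "tree_aut k id"
  by (simp add: tree_aut_def)

lemma ta_comp: assumes "tree_aut k f" "tree_aut k g" shows "tree_aut k (f \<circ> g)"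
  unfolding tree_aut_def
proof (intro conjI allI impI ballI)
  show "bij_betw (f \<circ> g) (tree_vertices k) (tree_vertices k)"
    using ta_bij[OF assms(1)] ta_bij[OF assms(2)] by (rule bij_betw_trans[rotated])
next
  fix xs assume "xs \<notin> tree_vertices k" then show "(f \<circ> g) xs = xs"
    using assms by (simp add: tree_aut_def)
next
  fix xs show "length ((f \<circ> g) xs) = length xs" using assms by (simp add: ta_len)
next
  fix xs :: "bool list" and b :: bool assume l: "length xs < k"
  have lg: "length (g (xs @ [b])) = Suc (length xs)" using ta_len[OF assms(2)] by simp
  then obtain zs c where zs: "g (xs @ [b]) = zs @ [c]"
    using length_Suc_conv_rev by metis
  have "zs = g xs" using ta_par[OF assms(2) l, of b] zs by simp
  moreover have "length zs < k" using lg zs l by simp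
  ultimately show "butlast ((f \<circ> g) (xs @ [b])) = (f \<circ> g) xs"
    using ta_par[OF assms(1)] zs by simp
qed

lemma ta_inv: assumes "tree_aut k f" shows "tree_aut k (iv f)"
proof -
  have bf: "bij f" by (rule ta_bij_UNIV[OF assms])
  have fi: "f (iv f y) = y" for y using bf by (simp add: bij_is_surj surj_f_inv_f)
  have if1: "iv f (f y) = y" for y using bf by (simp add: bij_is_inj inv_f_f)
  have b: "bij_betw f (tree_vertices k) (tree_vertices k)" by (rule ta_bij[OF assms])
  have len: "length (iv f xs) = length xs" for xs
    using ta_len[OF assms, of "iv f xs"] fi by simp
  have V: "x \<in> tree_vertices k \<longleftrightarrow> length x \<le> k" for x by (simp add: tree_vertices_def)
  have bb: "bij_betw (iv f) (tree_vertices k) (tree_vertices k)"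
    unfolding bij_betw_def inj_on_def
  proof (intro conjI ballI impI)
    show "\<And>x y. iv f x = iv f y \<Longrightarrow> x = y" by (metis fi)
    show "iv f ` tree_vertices k = tree_vertices k"
    proof
      show "iv f ` tree_vertices k \<subseteq> tree_vertices k" using len V by auto
      show "tree_vertices k \<subseteq> iv f ` tree_vertices k"
      proof
        fix x assume "x \<in> tree_vertices k"
        then have "f x \<in> tree_vertices k" using V ta_len[OF assms] by simp
        then show "x \<in> iv f ` tree_vertices k" using if1 by (metis image_eqI)
      qed
    qed
  qed
  have out: "iv f xs = xs" if "xs \<notin> tree_vertices k" for xs
  proof -
    have "f xs = xs" using assms that by (simp add: tree_aut_def)
    then show ?thesis by (metis if1)
  qed
  have par: "butlast (iv f (xs @ [b])) = iv f xs" if l: "length xs < k" for xs b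
  proof -
    let ?y = "iv f (xs @ [b])"
    have ly: "length ?y = Suc (length xs)" using len by simp
    then obtain zs c where zs: "?y = zs @ [c]"
      using length_Suc_conv_rev by metis
    have "f ?y = xs @ [b]" by (rule fi)
    then have "butlast (f (zs @ [c])) = xs" using zs by simp
    then have "f zs = xs" using ta_par[OF assms, of zs c] ly zs l by simp
    then have "iv f xs = zs" using if1 by blast
    then show ?thesis using zs by simp
  qed
  show ?thesis unfolding tree_aut_def using bb out len par by simp
qed

lemma ta_inv_comp: "tree_aut k f \<Longrightarrow> iv f \<circ> f = id"
  by (rule inv_o_cancel[OF bij_is_inj[OF ta_bij_UNIV]])
lemma ta_comp_inv: "tree_aut k f \<Longrightarrow> f \<circ> iv f = id"
  using surj_iff[THEN iffD1, OF bij_is_surj[OF ta_bij_UNIV]] by simp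

lemma ta_prefix: assumes "tree_aut k f" shows "length (xs @ ys) \<le> k \<Longrightarrow> take (length xs) (f (xs @ ys)) = f xs"
proof (induction ys rule: rev_induct)
  case Nil then show ?case by (simp add: ta_len[OF assms])
next
  case (snoc y ys)
  have l: "length (xs @ ys) < k" using snoc.prems by simp
  have lg: "length (f ((xs @ ys) @ [y])) = Suc (length (xs @ ys))" by (simp add: ta_len[OF assms])
  then obtain zs c where zs: "f ((xs @ ys) @ [y]) = zs @ [c]"
    using length_Suc_conv_rev by metis
  have "zs = f (xs @ ys)" using ta_par[OF assms l, of y] zs by simp
  then show ?case using snoc zs lg by simp
qed

lemma finite_V: "finite (tree_vertices k)"
proof -
  have "tree_vertices k \<subseteq> {xs. set xs \<subseteq> (UNIV::bool set) \<and> length xs \<le> k}"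
    by (auto simp: tree_vertices_def)
  then show ?thesis using finite_lists_length_le[of "UNIV::bool set" k] finite_subset by auto
qed

definition tp :: "(bool list \<Rightarrow> bool list) \<Rightarrow> bool" where
  "tp f = (f [False] = [True])"
definition sec :: "(bool list \<Rightarrow> bool list) \<Rightarrow> bool \<Rightarrow> bool list \<Rightarrow> bool list" where
  "sec f b = (\<lambda>y. tl (f (b # y)))"
definition mk :: "nat \<Rightarrow> bool \<Rightarrow> (bool list \<Rightarrow> bool list) \<Rightarrow> (bool list \<Rightarrow> bool list) \<Rightarrow> bool list \<Rightarrow> bool list" where
  "mk k a f0 f1 x = (case x of [] \<Rightarrow> [] | b # y \<Rightarrow> if length y \<le> k then (b \<noteq> a) # (if b then f1 y else f0 y) else x)"

lemma mk_cons: "length y \<le> k \<Longrightarrow> mk k a f0 f1 (b # y) = (b \<noteq> a) # (if b then f1 y else f0 y)"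
  by (simp add: mk_def)
lemma mk_cons_out: "\<not> length y \<le> k \<Longrightarrow> mk k a f0 f1 (b # y) = b # y"
  by (simp add: mk_def)

lemma ta_nil: "tree_aut k f \<Longrightarrow> f [] = []"
  using ta_len[of k f "[]"] by simp

lemma ta_single: assumes "tree_aut (Suc k) f" shows "f [b] = [b \<noteq> tp f]"
proof -
  have "length (f [False]) = 1" "length (f [True]) = 1" using ta_len[OF assms] by auto
  then obtain c d where c: "f [False] = [c]" and d: "f [True] = [d]"
    by (metis One_nat_def length_0_conv length_Suc_conv)
  have "inj_on f (tree_vertices (Suc k))" using ta_bij[OF assms] by (simp add: bij_betw_def)
  moreover have "[False] \<in> tree_vertices (Suc k)" "[True] \<in> tree_vertices (Suc k)"
    by (auto simp: tree_vertices_def)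
  ultimately have "f [False] \<noteq> f [True]" by (metis inj_on_contraD list.inject)
  then have "d = (\<not> c)" using c d by auto
  then show ?thesis using c d by (cases b) (auto simp: tp_def)
qed

lemma ta_cons: assumes "tree_aut (Suc k) f" "length y \<le> k"
  shows "f (b # y) = (b \<noteq> tp f) # sec f b y"
proof -
  have "take (length [b]) (f ([b] @ y)) = f [b]" using ta_prefix[OF assms(1), of "[b]" y] assms(2) by simp
  then have "take 1 (f (b # y)) = [b \<noteq> tp f]" using ta_single[OF assms(1)] by simp
  moreover have "f (b # y) \<noteq> []" using ta_len[OF assms(1), of "b # y"] by auto
  ultimately show ?thesis unfolding sec_def by (cases "f (b # y)") auto
qed

lemma ta_sec_out: assumes "tree_aut (Suc k) f" "\<not> length y \<le> k" shows "sec f b y = y"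
  using ta_out[OF assms(1), of "b # y"] assms(2) by (simp add: sec_def)

lemma ta_sec: assumes "tree_aut (Suc k) f" shows "tree_aut k (sec f b)"
proof -
  have V: "x \<in> tree_vertices n \<longleftrightarrow> length x \<le> n" for x n by (simp add: tree_vertices_def)
  have len: "length (sec f b y) = length y" for y
  proof (cases "length y \<le> k")
    case True then show ?thesis using ta_len[OF assms, of "b # y"] by (simp add: sec_def)
  next
    case False then show ?thesis by (simp add: ta_sec_out[OF assms])
  qed
  have inj: "inj_on (sec f b) (tree_vertices k)"
  proof (rule inj_onI)
    fix y y' assume y: "y \<in> tree_vertices k" and y': "y' \<in> tree_vertices k" and e: "sec f b y = sec f b y'"
    have "f (b # y) = f (b # y')" using ta_cons[OF assms] y y' e V by simp
    moreover have "inj f" using ta_bij_UNIV[OF assms] by (simp add: bij_is_inj)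
    ultimately show "y = y'" by (simp add: inj_eq)
  qed
  have img: "sec f b ` tree_vertices k \<subseteq> tree_vertices k" using len V by auto
  have bb: "bij_betw (sec f b) (tree_vertices k) (tree_vertices k)"
    unfolding bij_betw_def using inj endo_inj_surj[OF finite_V img inj] by simp
  have out: "sec f b xs = xs" if "xs \<notin> tree_vertices k" for xs
    using ta_sec_out[OF assms] that V by simp
  have par: "butlast (sec f b (xs @ [c])) = sec f b xs" if "length xs < k" for xs c
  proof -
    have "butlast (f ((b # xs) @ [c])) = f (b # xs)" using ta_par[OF assms, of "b # xs" c] that by simp
    then show ?thesis by (simp add: sec_def butlast_tl)
  qed
  show ?thesis unfolding tree_aut_def using bb out len par by simp
qed

lemma ta_decomp: assumes "tree_aut (Suc k) f" shows "f = mk k (tp f) (sec f False) (sec f True)"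
proof
  fix x show "f x = mk k (tp f) (sec f False) (sec f True) x"
  proof (cases x)
    case Nil then show ?thesis by (simp add: mk_def ta_nil[OF assms])
  next
    case (Cons b y)
    show ?thesis
    proof (cases "length y \<le> k")
      case True then show ?thesis using Cons ta_cons[OF assms True, of b] by (cases b) (simp_all add: mk_def)
    next
      case False then show ?thesis using Cons ta_out[OF assms, of x] by (simp add: mk_def)
    qed
  qed
qed

lemma ta_mk: assumes f0: "tree_aut k f0" and f1: "tree_aut k f1" shows "tree_aut (Suc k) (mk k a f0 f1)"
proof -
  let ?m = "mk k a f0 f1"
  have V: "x \<in> tree_vertices n \<longleftrightarrow> length x \<le> n" for x n by (simp add: tree_vertices_def)
  have len: "length (?m x) = length x" for x
    using ta_len[OF f0] ta_len[OF f1] by (cases x) (auto simp: mk_def)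
  have i0: "inj f0" using ta_bij_UNIV[OF f0] by (simp add: bij_is_inj)
  have i1: "inj f1" using ta_bij_UNIV[OF f1] by (simp add: bij_is_inj)
  have inj: "inj_on ?m (tree_vertices (Suc k))"
  proof (rule inj_onI)
    fix x x' assume x: "x \<in> tree_vertices (Suc k)" and x': "x' \<in> tree_vertices (Suc k)" and e: "?m x = ?m x'"
    show "x = x'"
    proof (cases x)
      case Nil then show ?thesis using e len[of x'] by (simp add: mk_def)
    next
      case (Cons b y)
      then obtain b' y' where x'c: "x' = b' # y'" using e len[of x'] len[of x] by (cases x') auto
      have ly: "length y \<le> k" "length y' \<le> k" using x x' Cons x'c V by auto
      then have "b = b'" using e Cons x'c by (simp add: mk_def split: if_splits)
      then show ?thesis using e Cons x'c ly i0 i1 by (cases b) (auto simp: mk_def inj_eq)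
    qed
  qed
  have img: "?m ` tree_vertices (Suc k) \<subseteq> tree_vertices (Suc k)" using len V by auto
  have bb: "bij_betw ?m (tree_vertices (Suc k)) (tree_vertices (Suc k))"
    unfolding bij_betw_def using inj endo_inj_surj[OF finite_V img inj] by simp
  have out: "?m xs = xs" if "xs \<notin> tree_vertices (Suc k)" for xs
    using that V by (cases xs) (simp_all add: mk_def)
  have par: "butlast (?m (xs @ [c])) = ?m xs" if "length xs < Suc k" for xs c
  proof (cases xs)
    case Nil then show ?thesis using ta_nil[OF f0] ta_nil[OF f1] by (simp add: mk_def)
  next
    case (Cons b y)
    have ly: "length y < k" using that Cons by simp
    let ?h = "if b then f1 else f0"
    have th: "tree_aut k ?h" using f0 f1 by simp
    have ne: "?h (y @ [c]) \<noteq> []" using ta_len[OF th, of "y @ [c]"] by auto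
    have bl: "butlast (?h (y @ [c])) = ?h y" using ta_par[OF th ly, of c] .
    have "?m (xs @ [c]) = (b \<noteq> a) # ?h (y @ [c])" using Cons ly by (simp add: mk_cons)
    moreover have "?m xs = (b \<noteq> a) # ?h y" using Cons ly by (simp add: mk_cons)
    ultimately show ?thesis using ne bl by simp
  qed
  show ?thesis unfolding tree_aut_def using bb out len par by simp
qed

lemma tp_mk: "tree_aut k f0 \<Longrightarrow> tree_aut k f1 \<Longrightarrow> tp (mk k a f0 f1) = a"
  by (simp add: tp_def mk_def ta_nil)

lemma sec_mk: assumes "tree_aut k f0" "tree_aut k f1"
  shows "sec (mk k a f0 f1) b = (if b then f1 else f0)"
proof
  fix y show "sec (mk k a f0 f1) b y = (if b then f1 else f0) y"
    using ta_out[OF assms(1), of y] ta_out[OF assms(2), of y] by (cases b) (auto simp: sec_def mk_def)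
qed

lemma ta_eqI: assumes "tree_aut (Suc k) f" "tree_aut (Suc k) g" "tp f = tp g"
  "sec f False = sec g False" "sec f True = sec g True" shows "f = g"
proof -
  have "f = mk k (tp f) (sec f False) (sec f True)" by (rule ta_decomp[OF assms(1)])
  also have "\<dots> = mk k (tp g) (sec g False) (sec g True)" using assms(3-5) by simp
  also have "\<dots> = g" by (rule ta_decomp[OF assms(2), symmetric])
  finally show ?thesis .
qed

lemma tp_comp: assumes "tree_aut (Suc k) f" "tree_aut (Suc k) g" shows "tp (f \<circ> g) = (tp f \<noteq> tp g)"
proof -
  have "(f \<circ> g) [False] = [tp g \<noteq> tp f]"
    using ta_single[OF assms(1), of "tp g"] ta_single[OF assms(2), of False] by simp
  then show ?thesis unfolding tp_def by auto
qed

lemma sec_comp: assumes f: "tree_aut (Suc k) f" and g: "tree_aut (Suc k) g"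
  shows "sec (f \<circ> g) b = sec f (b \<noteq> tp g) \<circ> sec g b"
proof
  fix y show "sec (f \<circ> g) b y = (sec f (b \<noteq> tp g) \<circ> sec g b) y"
  proof (cases "length y \<le> k")
    case True
    have "length (sec g b y) \<le> k" using ta_len[OF ta_sec[OF g]] True by simp
    then have "f (g (b # y)) = ((b \<noteq> tp g) \<noteq> tp f) # sec f (b \<noteq> tp g) (sec g b y)"
      using ta_cons[OF g True, of b] ta_cons[OF f, of "sec g b y"] by simp
    moreover have "sec (f \<circ> g) b y = tl (f (g (b # y)))" by (simp add: sec_def)
    ultimately show ?thesis by simp
  next
    case False
    have "sec (f \<circ> g) b y = tl (f (g (b # y)))" by (simp add: sec_def)
    then show ?thesis using False ta_sec_out[OF f False] ta_sec_out[OF g False] ta_out[OF f, of "b # y"] ta_out[OF g, of "b # y"]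
      by simp
  qed
qed

lemma sec_id: "sec id b = id"
  by (simp add: sec_def fun_eq_iff)
lemma tp_id: "tp id = False"
  by (simp add: tp_def)

fun lev :: "nat \<Rightarrow> (bool list \<Rightarrow> bool list) \<Rightarrow> bool" where
  "lev 0 f = tp f"
| "lev (Suc l) f = (lev l (sec f False) \<noteq> lev l (sec f True))"

lemma lev_id: "lev l id = False"
proof (induction l)
  case 0 show ?case by (simp only: lev.simps tp_id)
next
  case (Suc l) show ?case by (simp only: lev.simps sec_id Suc.IH) simp
qed

lemma lev_comp: "tree_aut k f \<Longrightarrow> tree_aut k g \<Longrightarrow> l < k \<Longrightarrow> lev l (f \<circ> g) = (lev l f \<noteq> lev l g)"
proof (induction l arbitrary: k f g)
  case 0
  then obtain k' where k: "k = Suc k'" by (cases k) auto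
  have "tp (f \<circ> g) = (tp f \<noteq> tp g)" using tp_comp[of k' f g] 0 k by blast
  then show ?case by (simp only: lev.simps)
next
  case (Suc l)
  then obtain k' where k: "k = Suc k'" by (cases k) auto
  have f: "tree_aut (Suc k') f" and g: "tree_aut (Suc k') g" using Suc k by auto
  have l: "l < k'" using Suc k by simp
  have A: "sec (f \<circ> g) False = sec f (tp g) \<circ> sec g False" using sec_comp[OF f g, of False] by simp
  have B: "sec (f \<circ> g) True = sec f (\<not> tp g) \<circ> sec g True" using sec_comp[OF f g, of True] by simp
  have e: "lev l (sec f c \<circ> sec g b) = (lev l (sec f c) \<noteq> lev l (sec g b))" for c b
    using Suc.IH[OF ta_sec[OF f] ta_sec[OF g] l] .
  have "lev (Suc l) (f \<circ> g) = (lev l (sec f (tp g) \<circ> sec g False) \<noteq> lev l (sec f (\<not> tp g) \<circ> sec g True))"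
    by (simp only: lev.simps A B)
  also have "\<dots> = ((lev l (sec f (tp g)) \<noteq> lev l (sec g False)) \<noteq> (lev l (sec f (\<not> tp g)) \<noteq> lev l (sec g True)))"
    by (simp only: e)
  also have "\<dots> = (lev (Suc l) f \<noteq> lev (Suc l) g)"
    by (cases "tp g") (simp_all only: lev.simps not_True_eq_False not_False_eq_True, auto)
  finally show ?case .
qed

lemma lev_inv: assumes "tree_aut k f" "l < k" shows "lev l (iv f) = lev l f"
  using lev_comp[OF assms(1) ta_inv[OF assms(1)] assms(2)] ta_comp_inv[OF assms(1)] lev_id by auto

section \<open>Parity of the leaf permutation\<close>

definition lift :: "bool \<Rightarrow> (bool list \<Rightarrow> bool list) \<Rightarrow> bool list \<Rightarrow> bool list" where
  "lift b p x = (case x of [] \<Rightarrow> [] | c # y \<Rightarrow> if c = b then b # p y else c # y)"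

definition flip :: "nat \<Rightarrow> bool list \<Rightarrow> bool list" where
  "flip n x = (if length x = Suc n then (case x of [] \<Rightarrow> [] | c # y \<Rightarrow> (\<not> c) # y) else x)"

definition half :: "bool \<Rightarrow> nat \<Rightarrow> bool list \<Rightarrow> bool list" where
  "half d n x = (case x of c # d' # z \<Rightarrow> if length z = n \<and> d' = d then (\<not> c) # d' # z else x | _ \<Rightarrow> x)"

definition gam :: "nat \<Rightarrow> bool list \<Rightarrow> bool list" where
  "gam n x = (case x of c # d' # z \<Rightarrow> if length z = n then c # (\<not> d') # z else x | _ \<Rightarrow> x)"

lemma lift_id: "lift b id = id"
proof
  fix x show "lift b id x = id x" by (cases x) (auto simp: lift_def)
qed

lemma lift_transpose: "lift b (Transposition.transpose x y \<circ> p) = Transposition.transpose (b # x) (b # y) \<circ> lift b p"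
proof
  fix z show "lift b (Transposition.transpose x y \<circ> p) z = (Transposition.transpose (b # x) (b # y) \<circ> lift b p) z"
    by (cases z) (auto simp: lift_def transpose_def)
qed

lemma swapidseq_lift: "swapidseq n p \<Longrightarrow> swapidseq n (lift b p)"
proof (induction rule: swapidseq.induct)
  case id then show ?case by (simp add: lift_id[unfolded id_def] id_def)
next
  case (comp_Suc n p x y)
  have "swapidseq (Suc n) (Transposition.transpose (b # x) (b # y) \<circ> lift b p)"
    by (rule swapidseq.comp_Suc[OF comp_Suc.IH]) (use comp_Suc.hyps(2) in simp)
  then show ?case unfolding lift_transpose .
qed

lemma lift_perm: assumes "permutation p" shows "permutation (lift b p)" "evenperm (lift b p) = evenperm p"
proof -
  obtain n where n: "swapidseq n p" using assms unfolding permutation_def by blast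
  show "permutation (lift b p)" unfolding permutation_def using swapidseq_lift[OF n] by blast
  show "evenperm (lift b p) = evenperm p"
    using evenperm_unique[OF swapidseq_lift[OF n] refl] evenperm_unique[OF n refl] by simp
qed

lemma invol_perm: assumes "p \<circ> p = id" "finite {x. p x \<noteq> x}" shows "permutation p"
  using assms o_bij[OF assms(1) assms(1)] by (simp add: permutation)

lemma finite_len: "finite {x::bool list. length x = n}"
proof -
  have "{x::bool list. length x = n} \<subseteq> tree_vertices n" by (auto simp: tree_vertices_def)
  then show ?thesis using finite_V finite_subset by blast
qed

lemma flip0: "flip 0 = Transposition.transpose [False] [True]"
proof
  fix x show "flip 0 x = Transposition.transpose [False] [True] x"
  proof (cases "length x = 1")
    case True then obtain c where "x = [c]" by (metis One_nat_def length_0_conv length_Suc_conv)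
    then show ?thesis by (cases c) (simp_all add: flip_def transpose_def)
  next
    case False then show ?thesis by (auto simp: flip_def transpose_def)
  qed
qed

lemma half_invol: "half d n \<circ> half d n = id"
proof
  fix x show "(half d n \<circ> half d n) x = id x"
    by (cases x rule: remdups_adj.cases) (auto simp: half_def)
qed

lemma gam_invol: "gam n \<circ> gam n = id"
proof
  fix x show "(gam n \<circ> gam n) x = id x"
    by (cases x rule: remdups_adj.cases) (auto simp: gam_def)
qed

lemma half_supp: "{x. half d n x \<noteq> x} \<subseteq> {x. length x = Suc (Suc n)}"
proof
  fix x assume "x \<in> {x. half d n x \<noteq> x}" then show "x \<in> {x. length x = Suc (Suc n)}"
    by (cases x rule: remdups_adj.cases) (auto simp: half_def split: if_splits)
qed

lemma gam_supp: "{x. gam n x \<noteq> x} \<subseteq> {x. length x = Suc (Suc n)}"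
proof
  fix x assume "x \<in> {x. gam n x \<noteq> x}" then show "x \<in> {x. length x = Suc (Suc n)}"
    by (cases x rule: remdups_adj.cases) (auto simp: gam_def split: if_splits)
qed

lemma half_perm: "permutation (half d n)"
  using invol_perm[OF half_invol] finite_subset[OF half_supp finite_len] by blast
lemma gam_perm: "permutation (gam n)"
  using invol_perm[OF gam_invol] finite_subset[OF gam_supp finite_len] by blast

lemma flip_Suc: "flip (Suc n) = half False n \<circ> half True n"
proof
  fix x show "flip (Suc n) x = (half False n \<circ> half True n) x"
    by (cases x rule: remdups_adj.cases) (auto simp: half_def flip_def)
qed

lemma half_conj: "half True n = gam n \<circ> (half False n \<circ> gam n)"
proof
  fix x show "half True n x = (gam n \<circ> (half False n \<circ> gam n)) x"
    by (cases x rule: remdups_adj.cases) (auto simp: half_def gam_def)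
qed

lemma flip_perm: "permutation (flip n)" "evenperm (flip n) = (n \<noteq> 0)"
proof -
  show "permutation (flip n)"
    by (cases n) (simp_all add: flip0 permutation_swap_id flip_Suc permutation_compose half_perm)
  show "evenperm (flip n) = (n \<noteq> 0)"
  proof (cases n)
    case 0 then show ?thesis by (simp add: flip0 evenperm_swap)
  next
    case (Suc m)
    have "evenperm (half True m) = evenperm (half False m)"
      unfolding half_conj
      by (auto simp add: evenperm_comp gam_perm half_perm permutation_compose)
    then show ?thesis using Suc by (simp add: flip_Suc evenperm_comp half_perm)
  qed
qed

lemma ta_zero: assumes "tree_aut 0 f" shows "f = id"
proof
  fix x show "f x = id x"
    using ta_nil[OF assms] ta_out[OF assms, of x] by (cases x) auto
qed

lemma leaf_id: "leaf_perm k id = id"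
  by (simp add: leaf_perm_def fun_eq_iff)

lemma leaf_mk: assumes f0: "tree_aut k f0" and f1: "tree_aut k f1"
  shows "leaf_perm (Suc k) (mk k a f0 f1) = (if a then flip k else id) \<circ> (lift False (leaf_perm k f0) \<circ> lift True (leaf_perm k f1))"
proof
  fix x show "leaf_perm (Suc k) (mk k a f0 f1) x = ((if a then flip k else id) \<circ> (lift False (leaf_perm k f0) \<circ> lift True (leaf_perm k f1))) x"
  proof (cases x)
    case Nil then show ?thesis by (simp add: leaf_perm_def lift_def flip_def)
  next
    case (Cons c y)
    show ?thesis
    proof (cases "length y = k")
      case True then show ?thesis using Cons
        by (cases c) (simp_all add: leaf_perm_def lift_def flip_def mk_cons ta_len[OF f0] ta_len[OF f1])
    next
      case False then show ?thesis using Cons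
        by (cases c) (simp_all add: leaf_perm_def lift_def flip_def mk_def)
    qed
  qed
qed

lemma even_leaf: "tree_aut (Suc k) f \<Longrightarrow> permutation (leaf_perm (Suc k) f) \<and> evenperm (leaf_perm (Suc k) f) = (\<not> lev k f)"
proof (induction k arbitrary: f)
  case 0
  have s: "sec f b = id" for b using ta_zero[OF ta_sec[OF 0]] .
  have "leaf_perm (Suc 0) f = (if tp f then flip 0 else id)"
    using leaf_mk[OF ta_id ta_id, of 0 "tp f"] ta_decomp[OF 0] s by (simp add: leaf_id lift_id)
  then show ?case using flip_perm[of 0] by simp
next
  case (Suc k)
  have f0: "tree_aut (Suc k) (sec f False)" and f1: "tree_aut (Suc k) (sec f True)"
    using ta_sec[OF Suc.prems] by auto
  note I0 = Suc.IH[OF f0] and I1 = Suc.IH[OF f1]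
  have e: "leaf_perm (Suc (Suc k)) f = (if tp f then flip (Suc k) else id) \<circ>
     (lift False (leaf_perm (Suc k) (sec f False)) \<circ> lift True (leaf_perm (Suc k) (sec f True)))"
    using leaf_mk[OF f0 f1, of "tp f"] ta_decomp[OF Suc.prems] by simp
  have p: "permutation (if tp f then flip (Suc k) else id)" "evenperm (if tp f then flip (Suc k) else id)"
    using flip_perm[of "Suc k"] by auto
  have q: "permutation (lift False (leaf_perm (Suc k) (sec f False)) \<circ> lift True (leaf_perm (Suc k) (sec f True)))"
    using I0 I1 lift_perm permutation_compose by blast
  have r: "evenperm (lift False (leaf_perm (Suc k) (sec f False)) \<circ> lift True (leaf_perm (Suc k) (sec f True))) = (\<not> lev (Suc k) f)"
    using I0 I1 lift_perm[of "leaf_perm (Suc k) (sec f False)" False] lift_perm[of "leaf_perm (Suc k) (sec f True)" True]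
    by (simp add: evenperm_comp)
  have ev: "evenperm (leaf_perm (Suc (Suc k)) f) = (\<not> lev (Suc k) f)"
    unfolding e using evenperm_comp[OF p(1) q] p(2) r by blast
  have pm: "permutation (leaf_perm (Suc (Suc k)) f)"
    unfolding e using permutation_compose[OF p(1) q] .
  show ?case using ev pm by blast
qed

lemma G_mult: "x \<otimes>\<^bsub>G_grp k\<^esub> y = x \<circ> y" by (simp add: G_grp_def)
lemma G_one: "\<one>\<^bsub>G_grp k\<^esub> = id" by (simp add: G_grp_def)
lemma G_carrier: "f \<in> carrier (G_grp (Suc n)) \<longleftrightarrow> tree_aut (Suc n) f \<and> \<not> lev n f"
  using even_leaf[of n f] by (auto simp: G_grp_def)

lemma G_comp: "f \<in> carrier (G_grp (Suc n)) \<Longrightarrow> g \<in> carrier (G_grp (Suc n)) \<Longrightarrow> f \<circ> g \<in> carrier (G_grp (Suc n))"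
  unfolding G_carrier using ta_comp lev_comp by (metis lessI)
lemma G_idc: "id \<in> carrier (G_grp (Suc n))"
  unfolding G_carrier using ta_id lev_id by blast
lemma G_iv: "f \<in> carrier (G_grp (Suc n)) \<Longrightarrow> iv f \<in> carrier (G_grp (Suc n))"
  unfolding G_carrier using ta_inv lev_inv by (metis lessI)

lemma G_group: "group (G_grp (Suc n))"
proof (rule groupI)
  fix x y z
  show "x \<in> carrier (G_grp (Suc n)) \<Longrightarrow> y \<in> carrier (G_grp (Suc n)) \<Longrightarrow> x \<otimes>\<^bsub>G_grp (Suc n)\<^esub> y \<in> carrier (G_grp (Suc n))"
    unfolding G_mult by (rule G_comp)
  show "\<one>\<^bsub>G_grp (Suc n)\<^esub> \<in> carrier (G_grp (Suc n))" unfolding G_one by (rule G_idc)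
  show "x \<otimes>\<^bsub>G_grp (Suc n)\<^esub> y \<otimes>\<^bsub>G_grp (Suc n)\<^esub> z = x \<otimes>\<^bsub>G_grp (Suc n)\<^esub> (y \<otimes>\<^bsub>G_grp (Suc n)\<^esub> z)"
    unfolding G_mult by (rule o_assoc[symmetric])
  show "\<one>\<^bsub>G_grp (Suc n)\<^esub> \<otimes>\<^bsub>G_grp (Suc n)\<^esub> x = x" unfolding G_mult G_one by simp
  assume "x \<in> carrier (G_grp (Suc n))"
  then show "\<exists>y\<in>carrier (G_grp (Suc n)). y \<otimes>\<^bsub>G_grp (Suc n)\<^esub> x = \<one>\<^bsub>G_grp (Suc n)\<^esub>"
    unfolding G_mult G_one using G_iv ta_inv_comp G_carrier by blast
qed

lemma G_inv: assumes "f \<in> carrier (G_grp (Suc n))" shows "inv\<^bsub>G_grp (Suc n)\<^esub> f = iv f"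
proof -
  have "iv f \<otimes>\<^bsub>G_grp (Suc n)\<^esub> f = \<one>\<^bsub>G_grp (Suc n)\<^esub>"
    unfolding G_mult G_one using assms ta_inv_comp G_carrier by blast
  then show ?thesis using group.inv_equality[OF G_group _ assms G_iv[OF assms]] by blast
qed

section \<open>Construction of commutators\<close>

lemma comm_from_rel: assumes f: "tree_aut k f" and g: "tree_aut k g" and r: "f \<circ> g = h \<circ> g \<circ> f"
  shows "h = f \<circ> g \<circ> iv f \<circ> iv g"
proof
  fix x
  have bf: "bij f" "bij g" using ta_bij_UNIV f g by auto
  have fi: "f (iv f z) = z" "g (iv g z) = z" for z using bf by (simp_all add: bij_is_surj surj_f_inv_f)
  have "(f \<circ> g \<circ> iv f \<circ> iv g) x = (h \<circ> g \<circ> f) (iv f (iv g x))" using r by (simp add: fun_eq_iff)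
  also have "\<dots> = h x" using fi by simp
  finally show "h x = (f \<circ> g \<circ> iv f \<circ> iv g) x" by simp
qed

lemma construct:
  assumes w: "tree_aut (Suc (Suc j)) w" and tw: "\<not> tp w"
    and y: "tree_aut (Suc j) y" and v: "tree_aut (Suc j) v"
    and r: "y \<circ> v = (sec w False \<circ> sec w True) \<circ> v \<circ> y"
  shows "mk (Suc j) True id y \<circ> mk (Suc j) False (sec w True \<circ> v) v
       = (w \<circ> mk (Suc j) False (sec w True \<circ> v) v) \<circ> mk (Suc j) True id y"
proof -
  let ?f = "mk (Suc j) True id y" and ?g = "mk (Suc j) False (sec w True \<circ> v) v"
  have w1: "tree_aut (Suc j) (sec w True)" using ta_sec[OF w] .
  have w1v: "tree_aut (Suc j) (sec w True \<circ> v)" using ta_comp[OF w1 v] .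
  have tf: "tree_aut (Suc (Suc j)) ?f" using ta_mk[OF ta_id y] .
  have tg: "tree_aut (Suc (Suc j)) ?g" using ta_mk[OF w1v v] .
  have tpf: "tp ?f = True" using tp_mk[OF ta_id y] .
  have tpg: "tp ?g = False" using tp_mk[OF w1v v] .
  have sf: "sec ?f False = id" "sec ?f True = y" using sec_mk[OF ta_id y] by auto
  have sg: "sec ?g False = sec w True \<circ> v" "sec ?g True = v" using sec_mk[OF w1v v] by auto
  have twg: "tree_aut (Suc (Suc j)) (w \<circ> ?g)" using ta_comp[OF w tg] .
  show ?thesis
  proof (rule ta_eqI[OF ta_comp[OF tf tg] ta_comp[OF twg tf]])
    show "tp (?f \<circ> ?g) = tp ((w \<circ> ?g) \<circ> ?f)"
      using tp_comp[OF tf tg] tp_comp[OF twg tf] tp_comp[OF w tg] tpf tpg tw by simp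
    have "sec (?f \<circ> ?g) False = sec ?f False \<circ> sec ?g False" using sec_comp[OF tf tg, of False] tpg by simp
    also have "\<dots> = sec w True \<circ> v" using sf sg by simp
    also have "\<dots> = sec w True \<circ> sec ?g True" using sg by simp
    also have "\<dots> = sec (w \<circ> ?g) True" using sec_comp[OF w tg, of True] tpg by simp
    also have "\<dots> = sec (w \<circ> ?g) True \<circ> sec ?f False" using sf by simp
    also have "\<dots> = sec ((w \<circ> ?g) \<circ> ?f) False" using sec_comp[OF twg tf, of False] tpf by simp
    finally show "sec (?f \<circ> ?g) False = sec ((w \<circ> ?g) \<circ> ?f) False" .
    have "sec (?f \<circ> ?g) True = sec ?f True \<circ> sec ?g True" using sec_comp[OF tf tg, of True] tpg by simp
    also have "\<dots> = y \<circ> v" using sf sg by simp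
    also have "\<dots> = (sec w False \<circ> sec ?g False) \<circ> y" using r sg by (simp add: o_assoc)
    also have "\<dots> = sec (w \<circ> ?g) False \<circ> sec ?f True" using sec_comp[OF w tg, of False] tpg sf by simp
    also have "\<dots> = sec ((w \<circ> ?g) \<circ> ?f) True" using sec_comp[OF twg tf, of True] tpf by simp
    finally show "sec (?f \<circ> ?g) True = sec ((w \<circ> ?g) \<circ> ?f) True" .
  qed
qed

lemma B1_triv: assumes "tree_aut (Suc 0) w" "\<not> lev 0 w" shows "w = id"
proof (rule ta_eqI[OF assms(1) ta_id])
  show "tp w = tp id" using assms(2) tp_id by simp
  show "sec w False = sec id False" "sec w True = sec id True"
    using ta_zero[OF ta_sec[OF assms(1)]] sec_id by auto
qed

lemma P: "tree_aut m w \<Longrightarrow> (\<forall>l<m. \<not> lev l w) \<Longrightarrow>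
  \<exists>y v. tree_aut m y \<and> (\<forall>j. m = Suc j \<longrightarrow> \<not> lev j y) \<and> tree_aut m v \<and> y \<circ> v = w \<circ> v \<circ> y"
proof (induction m arbitrary: w rule: nat_less_induct)
  case (1 m)
  show ?case
  proof (cases m)
    case 0
    then have "w = id" using ta_zero "1.prems"(1) by simp
    then show ?thesis using 0 ta_id lev_id by auto
  next
    case (Suc m')
    show ?thesis
    proof (cases m')
      case 0
      then have "w = id" using B1_triv "1.prems" Suc by simp
      then show ?thesis using Suc ta_id lev_id by auto
    next
      case (Suc j)
      have m: "m = Suc (Suc j)" using Suc \<open>m = Suc m'\<close> by simp
      have w: "tree_aut (Suc (Suc j)) w" using "1.prems"(1) m by simp
      have tw: "\<not> tp w" using "1.prems"(2) m by (metis lev.simps(1) zero_less_Suc)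
      have w0: "tree_aut (Suc j) (sec w False)" and w1: "tree_aut (Suc j) (sec w True)" using ta_sec[OF w] by auto
      let ?u = "sec w False \<circ> sec w True"
      have tu: "tree_aut (Suc j) ?u" using ta_comp[OF w0 w1] .
      have lu: "\<forall>l<Suc j. \<not> lev l ?u"
      proof (intro allI impI)
        fix l assume l: "l < Suc j"
        have "Suc l < m" using m l by simp
        then have "\<not> lev (Suc l) w" using "1.prems"(2) by blast
        then show "\<not> lev l ?u" using lev_comp[OF w0 w1 l] by simp
      qed
      obtain y v where y: "tree_aut (Suc j) y" and ly: "\<not> lev j y" and v: "tree_aut (Suc j) v"
        and r: "y \<circ> v = ?u \<circ> v \<circ> y"
        using "1.IH"[rule_format, of "Suc j" ?u] m tu lu by auto
      let ?f = "mk (Suc j) True id y" and ?g = "mk (Suc j) False (sec w True \<circ> v) v"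
      have tf: "tree_aut (Suc (Suc j)) ?f" using ta_mk[OF ta_id y] .
      have tg: "tree_aut (Suc (Suc j)) ?g" using ta_mk[OF ta_comp[OF w1 v] v] .
      have lf: "\<not> lev (Suc j) ?f" using sec_mk[OF ta_id y] ly lev_id by simp
      have "?f \<circ> ?g = w \<circ> ?g \<circ> ?f" using construct[OF w tw y v r] .
      then show ?thesis using tf tg lf m by blast
    qed
  qed
qed

section \<open>The extra invariant and the subgroup K\<close>

definition E :: "nat \<Rightarrow> (bool list \<Rightarrow> bool list) \<Rightarrow> bool" where
  "E n x = lev (n - 1) (sec x True)"

lemma E_id: "E n id = False"
  by (simp add: E_def sec_id lev_id)

lemma E_hom: assumes x: "x \<in> carrier (G_grp (Suc n))" and y: "y \<in> carrier (G_grp (Suc n))"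
  shows "E n (x \<circ> y) = (E n x \<noteq> E n y)"
proof -
  have tx: "tree_aut (Suc n) x" and lx: "\<not> lev n x" and ty: "tree_aut (Suc n) y"
    using x y G_carrier by auto
  show ?thesis
  proof (cases n)
    case 0
    have "E n z = False" if "tree_aut (Suc 0) z" for z
      using ta_zero[OF ta_sec[OF that]] 0 by (simp add: E_def lev_id)
    then show ?thesis using 0 tx ty ta_comp[OF tx ty] by simp
  next
    case (Suc j)
    have tx': "tree_aut (Suc (Suc j)) x" and ty': "tree_aut (Suc (Suc j)) y" using tx ty Suc by auto
    have s: "sec (x \<circ> y) True = sec x (\<not> tp y) \<circ> sec y True" using sec_comp[OF tx' ty', of True] by simp
    have c: "lev j (sec x (\<not> tp y) \<circ> sec y True) = (lev j (sec x (\<not> tp y)) \<noteq> lev j (sec y True))"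
      using lev_comp[OF ta_sec[OF tx'] ta_sec[OF ty'], of j] by simp
    have xx: "lev j (sec x False) = lev j (sec x True)" using lx Suc by simp
    show ?thesis unfolding E_def using Suc s c xx by (cases "tp y") auto
  qed
qed

lemma E_iv: assumes x: "x \<in> carrier (G_grp (Suc n))" shows "E n (iv x) = E n x"
proof -
  have "x \<circ> iv x = id" using x G_carrier ta_comp_inv by blast
  then have "E n (x \<circ> iv x) = False" using E_id by simp
  then show ?thesis using E_hom[OF x G_iv[OF x]] by simp
qed

definition K :: "nat \<Rightarrow> (bool list \<Rightarrow> bool list) set" where
  "K n = {h. tree_aut (Suc n) h \<and> (\<forall>l<Suc n. \<not> lev l h) \<and> \<not> E n h}"

lemma K_sub: "K n \<subseteq> carrier (G_grp (Suc n))"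
proof
  fix x assume "x \<in> K n" then show "x \<in> carrier (G_grp (Suc n))"
    unfolding G_carrier K_def by auto
qed

lemma K_comp: assumes a: "a \<in> K n" and b: "b \<in> K n" shows "a \<circ> b \<in> K n"
proof -
  have ac: "a \<in> carrier (G_grp (Suc n))" and bc: "b \<in> carrier (G_grp (Suc n))" using a b K_sub by auto
  have ta: "tree_aut (Suc n) a" and tb: "tree_aut (Suc n) b" using a b by (auto simp: K_def)
  show ?thesis unfolding K_def
  proof (intro CollectI conjI allI impI)
    show "tree_aut (Suc n) (a \<circ> b)" using ta_comp[OF ta tb] .
    fix l assume "l < Suc n"
    then show "\<not> lev l (a \<circ> b)" using lev_comp[OF ta tb] a b by (simp add: K_def)
  next
    show "\<not> E n (a \<circ> b)" using E_hom[OF ac bc] a b by (simp add: K_def)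
  qed
qed

lemma K_iv: assumes a: "a \<in> K n" shows "iv a \<in> K n"
proof -
  have ac: "a \<in> carrier (G_grp (Suc n))" using a K_sub by auto
  have ta: "tree_aut (Suc n) a" using a by (auto simp: K_def)
  show ?thesis unfolding K_def
  proof (intro CollectI conjI allI impI)
    show "tree_aut (Suc n) (iv a)" using ta_inv[OF ta] .
    fix l assume "l < Suc n"
    then show "\<not> lev l (iv a)" using lev_inv[OF ta] a by (simp add: K_def)
  next
    show "\<not> E n (iv a)" using E_iv[OF ac] a by (simp add: K_def)
  qed
qed

lemma K_subgroup: "subgroup (K n) (G_grp (Suc n))"
proof (rule group.subgroupI[OF G_group])
  show "K n \<subseteq> carrier (G_grp (Suc n))" by (rule K_sub)
  have "id \<in> K n" unfolding K_def using ta_id lev_id E_id by blast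
  then show "K n \<noteq> {}" by blast
  fix a b assume a: "a \<in> K n"
  have ac: "a \<in> carrier (G_grp (Suc n))" using a K_sub by auto
  show "inv\<^bsub>G_grp (Suc n)\<^esub> a \<in> K n" using G_inv[OF ac] K_iv[OF a] by simp
  assume b: "b \<in> K n"
  show "a \<otimes>\<^bsub>G_grp (Suc n)\<^esub> b \<in> K n" unfolding G_mult using K_comp[OF a b] .
qed

lemma comm_in_K: assumes f: "f \<in> carrier (G_grp (Suc n))" and g: "g \<in> carrier (G_grp (Suc n))"
  shows "f \<circ> g \<circ> iv f \<circ> iv g \<in> K n"
proof -
  have tf: "tree_aut (Suc n) f" and tg: "tree_aut (Suc n) g" using f g G_carrier by auto
  have fi: "iv f \<in> carrier (G_grp (Suc n))" and gi: "iv g \<in> carrier (G_grp (Suc n))" using G_iv f g by auto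
  have tfi: "tree_aut (Suc n) (iv f)" and tgi: "tree_aut (Suc n) (iv g)" using ta_inv tf tg by auto
  have c1: "f \<circ> g \<in> carrier (G_grp (Suc n))" using G_comp[OF f g] .
  have c2: "f \<circ> g \<circ> iv f \<in> carrier (G_grp (Suc n))" using G_comp[OF c1 fi] .
  have t1: "tree_aut (Suc n) (f \<circ> g)" and t2: "tree_aut (Suc n) (f \<circ> g \<circ> iv f)"
    using c1 c2 G_carrier by auto
  show ?thesis unfolding K_def
  proof (intro CollectI conjI allI impI)
    show "tree_aut (Suc n) (f \<circ> g \<circ> iv f \<circ> iv g)" using ta_comp[OF t2 tgi] .
    fix l assume l: "l < Suc n"
    show "\<not> lev l (f \<circ> g \<circ> iv f \<circ> iv g)"
      using lev_comp[OF t2 tgi l] lev_comp[OF t1 tfi l] lev_comp[OF tf tg l] lev_inv[OF tf l] lev_inv[OF tg l]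
      by auto
  next
    show "\<not> E n (f \<circ> g \<circ> iv f \<circ> iv g)"
      using E_hom[OF c2 gi] E_hom[OF c1 fi] E_hom[OF f g] E_iv[OF f] E_iv[OF g] by auto
  qed
qed

lemma K_comm: assumes h: "h \<in> K n"
  shows "\<exists>f g. f \<in> carrier (G_grp (Suc n)) \<and> g \<in> carrier (G_grp (Suc n)) \<and> f \<circ> g = h \<circ> g \<circ> f"
proof (cases n)
  case 0
  have "h = id" using h 0 B1_triv by (auto simp: K_def)
  then show ?thesis using G_idc by auto
next
  case (Suc j)
  have w: "tree_aut (Suc (Suc j)) h" and lh: "\<forall>l<Suc (Suc j). \<not> lev l h" and eh: "\<not> lev j (sec h True)"
    using h Suc by (auto simp: K_def E_def)
  have tw: "\<not> tp h" using lh by (metis lev.simps(1) zero_less_Suc)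
  have w0: "tree_aut (Suc j) (sec h False)" and w1: "tree_aut (Suc j) (sec h True)" using ta_sec[OF w] by auto
  let ?u = "sec h False \<circ> sec h True"
  have tu: "tree_aut (Suc j) ?u" using ta_comp[OF w0 w1] .
  have lu: "\<forall>l<Suc j. \<not> lev l ?u"
  proof (intro allI impI)
    fix l assume l: "l < Suc j"
    have "Suc l < Suc (Suc j)" using l by simp
    then have "\<not> lev (Suc l) h" using lh by blast
    then show "\<not> lev l ?u" using lev_comp[OF w0 w1 l] by simp
  qed
  obtain y v where y: "tree_aut (Suc j) y" and ly: "\<not> lev j y" and v: "tree_aut (Suc j) v"
    and r: "y \<circ> v = ?u \<circ> v \<circ> y"
    using P[OF tu lu] by auto
  let ?f = "mk (Suc j) True id y" and ?g = "mk (Suc j) False (sec h True \<circ> v) v"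
  have w1v: "tree_aut (Suc j) (sec h True \<circ> v)" using ta_comp[OF w1 v] .
  have tf: "tree_aut (Suc (Suc j)) ?f" using ta_mk[OF ta_id y] .
  have tg: "tree_aut (Suc (Suc j)) ?g" using ta_mk[OF w1v v] .
  have lf: "\<not> lev (Suc j) ?f" using sec_mk[OF ta_id y] ly lev_id by simp
  have "lev j (sec h True \<circ> v) = (lev j (sec h True) \<noteq> lev j v)" using lev_comp[OF w1 v, of j] by simp
  then have lg: "\<not> lev (Suc j) ?g" using sec_mk[OF w1v v] eh by simp
  have "?f \<circ> ?g = h \<circ> ?g \<circ> ?f" using construct[OF w tw y v r] .
  moreover have "?f \<in> carrier (G_grp (Suc n))" "?g \<in> carrier (G_grp (Suc n))"
    using tf tg lf lg Suc G_carrier by auto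
  ultimately show ?thesis by blast
qed

theorem theorem4:
  fixes k :: nat
  assumes "k \<ge> 1"
  shows "derived (G_grp k) (carrier (G_grp k)) =
    {f1 \<otimes>\<^bsub>G_grp k\<^esub> f2 \<otimes>\<^bsub>G_grp k\<^esub> inv\<^bsub>G_grp k\<^esub> f1 \<otimes>\<^bsub>G_grp k\<^esub> inv\<^bsub>G_grp k\<^esub> f2 | f1 f2.
       f1 \<in> carrier (G_grp k) \<and> f2 \<in> carrier (G_grp k)}"
proof -
  obtain n where k: "k = Suc n" using assms by (cases k) auto
  let ?G = "G_grp (Suc n)"
  let ?c = "\<lambda>f1 f2. f1 \<otimes>\<^bsub>?G\<^esub> f2 \<otimes>\<^bsub>?G\<^esub> inv\<^bsub>?G\<^esub> f1 \<otimes>\<^bsub>?G\<^esub> inv\<^bsub>?G\<^esub> f2"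
  let ?C = "{?c f1 f2 | f1 f2. f1 \<in> carrier ?G \<and> f2 \<in> carrier ?G}"
  have eq: "?c f g = f \<circ> g \<circ> iv f \<circ> iv g"
    if "f \<in> carrier ?G" "g \<in> carrier ?G" for f g
    by (simp only: G_mult G_inv[OF that(1)] G_inv[OF that(2)])
  have DS: "derived_set ?G (carrier ?G) = ?C"
  proof
    show "derived_set ?G (carrier ?G) \<subseteq> ?C"
    proof
      fix x assume "x \<in> derived_set ?G (carrier ?G)"
      then obtain f g where "f \<in> carrier ?G" "g \<in> carrier ?G" "x = ?c f g" by blast
      then show "x \<in> ?C" by blast
    qed
    show "?C \<subseteq> derived_set ?G (carrier ?G)"
    proof
      fix x assume "x \<in> ?C"
      then obtain f g where "f \<in> carrier ?G" "g \<in> carrier ?G" "x = ?c f g" by blast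
      then show "x \<in> derived_set ?G (carrier ?G)" by blast
    qed
  qed
  have CK: "?C \<subseteq> K n"
  proof
    fix x assume "x \<in> ?C"
    then obtain f g where f: "f \<in> carrier ?G" and g: "g \<in> carrier ?G" and x: "x = ?c f g" by blast
    show "x \<in> K n" unfolding x eq[OF f g] by (rule comm_in_K[OF f g])
  qed
  have KC: "K n \<subseteq> ?C"
  proof
    fix h assume h: "h \<in> K n"
    obtain f g where f: "f \<in> carrier ?G" and g: "g \<in> carrier ?G" and r: "f \<circ> g = h \<circ> g \<circ> f"
      using K_comm[OF h] by blast
    have tf: "tree_aut (Suc n) f" and tg: "tree_aut (Suc n) g" using f g G_carrier by auto
    have "h = ?c f g" unfolding eq[OF f g] by (rule comm_from_rel[OF tf tg r])
    then show "h \<in> ?C" using f g by blast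
  qed
  have "derived ?G (carrier ?G) \<subseteq> K n"
    unfolding derived_def DS by (rule group.generate_subgroup_incl[OF G_group CK K_subgroup])
  moreover have "?C \<subseteq> derived ?G (carrier ?G)"
    unfolding derived_def DS by (rule subsetI, rule generate.incl)
  ultimately have "derived ?G (carrier ?G) = ?C" using KC
    by (meson subset_antisym subset_trans)
  then show ?thesis unfolding k .
qed

end
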